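(* Let $(\zeta,x,y)$ be isothermal boundary-compatible toroidal coordinates on $\widetilde Q$, and let $\bm u_\zeta$ be a vector field on $D$ tangent to $\partial D$. With $\bm r=x\,\partial_x+y\,\partial_y$ and $\bm N_\zeta$ the shift vector of $(\zeta,x,y)$, we have $\bm r\cdot(\bm u_\zeta+\bm N_\zeta)=0$ on $\partial D$, where $\cdot$ is the standard Euclidean dot product on $\mathbb{R}^2$.
   Context: $D$ is the closed unit disc. $Q\subset\mathbb{R}^3$ is a toroidal domain: a submanifold with boundary with an orientation-preserving diffeomorphism $(\zeta,x,y):Q\to S^1\times D$; $\widetilde Q$ is its universal cover with pulled-back Euclidean metric $\widetilde g$ and lifted toroidal coordinates $(\zeta,x,y):\widetilde Q\to\mathbb{R}\times D$; $I_\zeta:D\to\widetilde Q$, $I_\zeta(x,y)=(\zeta,x,y)$. Hypersurface metric $h_\zeta=I_\zeta^*\widetilde g$; shift vector $\bm N_\zeta$ is the vector field on $D$ with $\iota_{\bm N_\zeta}h_\zeta=I_\zeta^*(\iota_{\partial_\zeta}\widetilde g)$. The coordinates are boundary-compatible if at every point of $\partial\widetilde Q$ the outward unit normal $\bm n$ satisfies $d\zeta(\bm n)=0$, and isothermal if $h_\zeta=f_\zeta(dx^2+dy^2)$ for some nowhere-vanishing function $f_\zeta$. *)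

theory Defs
  imports "HOL-Analysis.Analysis"
begin

text \<open>Points of the universal cover are represented by their lifted toroidal
coordinates (zeta, (x,y)) in R x D.  The map Phi sends such a coordinate triple to
the corresponding point of Q in R^3 (covering projection composed with the inverse
of the lifted coordinates); DPhi q is its derivative at q.\<close>

type_synonym coord = "real \<times> (real^2)"

definition disc :: "(real^2) set" where
  "disc = cball 0 1"

definition gmet :: "(coord \<Rightarrow> coord \<Rightarrow> real^3) \<Rightarrow> coord \<Rightarrow> coord \<Rightarrow> coord \<Rightarrow> real" where
  "gmet D\<Phi> q a b = inner (D\<Phi> q a) (D\<Phi> q b)"

text \<open>Hypersurface metric h_zeta = I_zeta^* g~ (dI_zeta w = (0,w)).\<close>
definition hmet :: "(coord \<Rightarrow> coord \<Rightarrow> real^3) \<Rightarrow> real \<Rightarrow> real^2 \<Rightarrow> real^2 \<Rightarrow> real^2 \<Rightarrow> real" where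
  "hmet D\<Phi> \<zeta> p v w = gmet D\<Phi> (\<zeta>, p) (0, v) (0, w)"

text \<open>Shift vector: iota_N h_zeta = I_zeta^*(iota_{d/dzeta} g~).\<close>
definition shift_vector :: "(coord \<Rightarrow> coord \<Rightarrow> real^3) \<Rightarrow> real \<Rightarrow> real^2 \<Rightarrow> real^2" where
  "shift_vector D\<Phi> \<zeta> p =
     (THE N. \<forall>w. hmet D\<Phi> \<zeta> p N w = gmet D\<Phi> (\<zeta>, p) (1, 0) (0, w))"

text \<open>Toroidal coordinates with zeta-period L: Phi is periodic in zeta, injective
on [0,L) x D (so descends to an embedding of S^1 x D onto Q), C^1 up to the boundary,
with invertible, orientation-preserving derivative.\<close>
definition toroidal_coordinates ::
  "(coord \<Rightarrow> real^3) \<Rightarrow> (coord \<Rightarrow> coord \<Rightarrow> real^3) \<Rightarrow> real \<Rightarrow> (real^3) set \<Rightarrow> bool" where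
  "toroidal_coordinates \<Phi> D\<Phi> L Q \<longleftrightarrow>
     L > 0 \<and> Q = \<Phi> ` (UNIV \<times> disc) \<and>
     (\<forall>\<zeta> p. p \<in> disc \<longrightarrow> \<Phi> (\<zeta> + L, p) = \<Phi> (\<zeta>, p)) \<and>
     inj_on \<Phi> ({0..<L} \<times> disc) \<and>
     (\<forall>q \<in> UNIV \<times> disc. (\<Phi> has_derivative D\<Phi> q) (at q within UNIV \<times> disc)) \<and>
     (\<forall>a. continuous_on (UNIV \<times> disc) (\<lambda>q. D\<Phi> q a)) \<and>
     (\<forall>q \<in> UNIV \<times> disc.
        det (vector [D\<Phi> q (1, 0), D\<Phi> q (0, vector [1, 0]), D\<Phi> q (0, vector [0, 1])]
              :: real^3^3) > 0)"

definition isothermal :: "(coord \<Rightarrow> coord \<Rightarrow> real^3) \<Rightarrow> bool" where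
  "isothermal D\<Phi> \<longleftrightarrow>
     (\<forall>\<zeta>. \<exists>f :: real^2 \<Rightarrow> real. \<forall>p \<in> disc. f p \<noteq> 0 \<and>
        (\<forall>v w. hmet D\<Phi> \<zeta> p v w = f p * inner v w))"

text \<open>Outward unit normal (in coordinate components) to the boundary of the
universal cover at the boundary point q = (zeta,p), |p| = 1.  The tangent space of
the boundary there is {(s,w). w . p = 0}.\<close>
definition outward_unit_normal :: "(coord \<Rightarrow> coord \<Rightarrow> real^3) \<Rightarrow> coord \<Rightarrow> coord \<Rightarrow> bool" where
  "outward_unit_normal D\<Phi> q n \<longleftrightarrow>
     gmet D\<Phi> q n n = 1 \<and>
     (\<forall>t. inner (snd t) (snd q) = 0 \<longrightarrow> gmet D\<Phi> q n t = 0) \<and>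
     inner (snd n) (snd q) > 0"

definition boundary_compatible :: "(coord \<Rightarrow> coord \<Rightarrow> real^3) \<Rightarrow> bool" where
  "boundary_compatible D\<Phi> \<longleftrightarrow>
     (\<forall>\<zeta> p n. norm p = 1 \<longrightarrow> outward_unit_normal D\<Phi> (\<zeta>, p) n \<longrightarrow> fst n = 0)"

end

theory Submission imports Defs
begin
lemma inj_aux:
  fixes D :: "real \<times> (real^2) \<Rightarrow> real^3"
  assumes lin: "linear D"
    and det: "det (vector [D (1, 0), D (0, vector [1, 0]), D (0, vector [0, 1])] :: real^3^3) > 0"
    and z: "D x = 0"
  shows "x = 0"
proof -
  define M where "M = (vector [D (1, 0), D (0, vector [1, 0]), D (0, vector [0, 1])] :: real^3^3)"
  obtain s w where x: "x = (s, w)" by (cases x)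
  have wdec: "(s, w) = s *\<^sub>R (1, 0) + (w$1) *\<^sub>R (0, vector [1, 0]) + (w$2) *\<^sub>R (0, vector [0, 1])"
    by (simp add: vec_eq_iff forall_2)
  have "D x = s *\<^sub>R D (1, 0) + (w$1) *\<^sub>R D (0, vector [1, 0]) + (w$2) *\<^sub>R D (0, vector [0, 1])"
    unfolding x by (subst wdec) (simp only: linear_add[OF lin] linear_scale[OF lin])
  also have "\<dots> = transpose M *v vector [s, w$1, w$2]"
    by (simp add: vec_eq_iff M_def matrix_vector_mult_def transpose_def sum_3 algebra_simps)
  finally have k: "transpose M *v vector [s, w$1, w$2] = 0" using z by simp
  have "invertible (transpose M)" using det by (simp add: invertible_det_nz det_transpose M_def)
  then have "\<exists>B. B ** transpose M = mat 1" unfolding invertible_def by blast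
  then have "vector [s, w$1, w$2] = (0::real^3)" using k matrix_left_invertible_ker by blast
  then have "s = 0" "w$1 = 0" "w$2 = 0" by (auto simp: vec_eq_iff forall_3 elim: allE[of _ 1] allE[of _ 2] allE[of _ 3])
  then show ?thesis using x by (simp add: vec_eq_iff forall_2 zero_prod_def)
qed
lemma perp_dec:
  fixes p w :: "real^2"
  assumes "norm p = 1" "inner w p = 0"
  shows "w = inner w (vector [-(p$2), p$1]) *\<^sub>R vector [-(p$2), p$1]"
proof -
  have n: "p$1 * p$1 + p$2 * p$2 = 1" using assms(1)
    by (simp add: norm_eq_sqrt_inner inner_vec_def sum_2)
  have o: "w$1 * p$1 + w$2 * p$2 = 0" using assms(2) by (simp add: inner_vec_def sum_2)
  have "w$1 = (w$1 * p$2 - w$2 * p$1) * p$2"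
  proof -
    have "w$1 = w$1 * (p$1 * p$1 + p$2 * p$2)" using n by simp
    also have "\<dots> = (w$1 * p$1 + w$2 * p$2) * p$1 + (w$1 * p$2 - w$2 * p$1) * p$2" by algebra
    also have "\<dots> = (w$1 * p$2 - w$2 * p$1) * p$2" unfolding o by simp
    finally show ?thesis .
  qed
  moreover have "w$2 = -(w$1 * p$2 - w$2 * p$1) * p$1"
  proof -
    have "w$2 = w$2 * (p$1 * p$1 + p$2 * p$2)" using n by simp
    also have "\<dots> = (w$1 * p$1 + w$2 * p$2) * p$2 - (w$1 * p$2 - w$2 * p$1) * p$1" by algebra
    also have "\<dots> = -(w$1 * p$2 - w$2 * p$1) * p$1" unfolding o by (simp add: algebra_simps)
    finally show ?thesis .
  qed
  ultimately show ?thesis by (simp add: vec_eq_iff forall_2 inner_vec_def sum_2; argo)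
qed

theorem lemma4:
  fixes \<Phi> :: "real \<times> (real^2) \<Rightarrow> real^3"
    and D\<Phi> :: "real \<times> (real^2) \<Rightarrow> real \<times> (real^2) \<Rightarrow> real^3"
    and L :: real and Q :: "(real^3) set"
    and u :: "real^2 \<Rightarrow> real^2" and \<zeta> :: real
  assumes "toroidal_coordinates \<Phi> D\<Phi> L Q"
    and "isothermal D\<Phi>"
    and "boundary_compatible D\<Phi>"
    and "\<forall>p. norm p = 1 \<longrightarrow> inner (u p) p = 0"
  shows "\<forall>p. norm p = 1 \<longrightarrow> inner p (u p + shift_vector D\<Phi> \<zeta> p) = 0"
proof (intro allI impI)
  fix p :: "real^2"
  assume np: "norm p = 1"
  define q where "q = (\<zeta>, p)"
  define D where "D = D\<Phi> q"
  have pd: "p \<in> disc" using np by (simp add: disc_def)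
  have qd: "q \<in> UNIV \<times> disc" using pd by (simp add: q_def)
  have "(\<Phi> has_derivative D) (at q within UNIV \<times> disc)"
    using assms(1) qd unfolding toroidal_coordinates_def D_def by blast
  then have lin: "linear D" by (simp add: has_derivative_linear)
  have det: "det (vector [D (1, 0), D (0, vector [1, 0]), D (0, vector [0, 1])] :: real^3^3) > 0"
    using assms(1) qd unfolding toroidal_coordinates_def D_def by blast
  have inj: "\<And>x. D x = 0 \<Longrightarrow> x = 0" using inj_aux[OF lin det] by blast
  obtain f where f: "\<forall>p \<in> disc. f p \<noteq> 0 \<and> (\<forall>v w. hmet D\<Phi> \<zeta> p v w = f p * inner v w)"
    using assms(2) unfolding isothermal_def by blast
  define c where "c = f p"
  have c0: "c \<noteq> 0" using f pd by (simp add: c_def)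
  have iso: "\<And>v w. inner (D (0, v)) (D (0, w)) = c * inner v w"
    using f pd unfolding c_def hmet_def gmet_def D_def q_def by blast
  define G where "G = (\<lambda>x y. inner (D x) (D y))"
  have Gadd1: "\<And>x y z. G (x + y) z = G x z + G y z" unfolding G_def by (simp add: linear_add[OF lin] inner_add_left)
  have Gsc1: "\<And>k x z. G (k *\<^sub>R x) z = k * G x z" unfolding G_def by (simp add: linear_scale[OF lin])
  have Gadd2: "\<And>x y z. G z (x + y) = G z x + G z y" unfolding G_def by (simp add: linear_add[OF lin] inner_add_right)
  have Gsc2: "\<And>k x z. G z (k *\<^sub>R x) = k * G z x" unfolding G_def by (simp add: linear_scale[OF lin])
  have Gsym: "\<And>x y. G x y = G y x" unfolding G_def by (simp add: inner_commute)
  define pp :: "real^2" where "pp = vector [-(p$2), p$1]"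
  have ppp: "inner pp p = 0" "inner p pp = 0" by (simp_all add: pp_def inner_vec_def sum_2)
  have npp: "inner pp pp = 1" using np
    by (simp add: pp_def norm_eq_sqrt_inner inner_vec_def sum_2 add.commute)
  define a :: "real \<times> (real^2)" where "a = (1, 0)"
  define b :: "real \<times> (real^2)" where "b = (0, pp)"
  define A where "A = G a a"
  define B where "B = G b b"
  define C where "C = G a b"
  define E where "E = G (0, p) a"
  have Bc: "B = c" unfolding B_def b_def G_def using iso npp by simp
  have F: "G (0, p) b = 0" unfolding b_def G_def using iso ppp by simp
  have "G a a \<ge> 0" unfolding G_def by simp
  have Bpos: "B > 0"
  proof -
    have "B \<ge> 0" unfolding B_def G_def by simp
    moreover have "B \<noteq> 0" using Bc c0 by simp
    ultimately show ?thesis by simp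
  qed
  define Z where "Z = B *\<^sub>R a - C *\<^sub>R b"
  have "Z \<noteq> 0" using Bpos by (simp add: Z_def a_def b_def prod_eq_iff)
  then have "D Z \<noteq> 0" using inj by blast
  then have Zp: "G Z Z > 0" unfolding G_def by simp
  have "G Z Z = B * (A * B - C * C)"
    unfolding Z_def diff_conv_add_uminus scaleR_minus_left[symmetric] Gadd1 Gadd2 Gsc1 Gsc2
    using Gsym[of a b] by (simp add: A_def B_def C_def algebra_simps)
  then have Dpos: "A * B - C * C > 0" using Zp Bpos by (simp add: zero_less_mult_iff)
  define \<alpha> where "\<alpha> = - E * B / (A * B - C * C)"
  define \<beta> where "\<beta> = - \<alpha> * C / B"
  define n' where "n' = (0, p) + \<alpha> *\<^sub>R a + \<beta> *\<^sub>R b"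
  have Gna: "G n' a = 0"
  proof -
    have "G n' a = E + \<alpha> * A + \<beta> * C"
      unfolding n'_def Gadd1 Gsc1 using Gsym[of a b] by (simp add: E_def A_def C_def)
    also have "\<dots> = 0" using Dpos Bpos unfolding \<alpha>_def \<beta>_def by (simp add: field_simps)
    finally show ?thesis .
  qed
  have Gnb: "G n' b = 0"
  proof -
    have "G n' b = \<alpha> * C + \<beta> * B"
      unfolding n'_def Gadd1 Gsc1 using F by (simp add: B_def C_def)
    also have "\<dots> = 0" using Bpos unfolding \<beta>_def by (simp add: field_simps)
    finally show ?thesis .
  qed
  have sn': "inner (snd n') p = 1"
    using np ppp by (simp add: n'_def a_def b_def inner_add_left dot_square_norm)
  have "n' \<noteq> 0" using sn' by auto
  then have "D n' \<noteq> 0" using inj by blast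
  define \<nu> where "\<nu> = norm (D n')"
  have \<nu>pos: "\<nu> > 0" using \<open>D n' \<noteq> 0\<close> by (simp add: \<nu>_def)
  define n where "n = (1 / \<nu>) *\<^sub>R n'"
  have "outward_unit_normal D\<Phi> q n"
    unfolding outward_unit_normal_def
  proof (intro conjI allI impI)
    show "gmet D\<Phi> q n n = 1"
      using \<nu>pos unfolding gmet_def D_def[symmetric] n_def linear_scale[OF lin]
      by (simp add: \<nu>_def power2_norm_eq_inner[symmetric] power2_eq_square)
    show "0 < inner (snd n) (snd q)" using sn' \<nu>pos by (simp add: n_def q_def)
    fix t :: "real \<times> (real^2)"
    assume "inner (snd t) (snd q) = 0"
    then have tp: "inner (snd t) p = 0" by (simp add: q_def)
    have "t = fst t *\<^sub>R a + inner (snd t) pp *\<^sub>R b"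
      using perp_dec[OF np tp] by (simp add: a_def b_def pp_def prod_eq_iff)
    then have "G n' t = 0"
      by (metis Gadd2 Gsc2 Gna Gnb mult_zero_right add_0)
    then show "gmet D\<Phi> q n t = 0"
      unfolding gmet_def D_def[symmetric] n_def using Gsc1 unfolding G_def by simp
  qed
  then have "fst n = 0" using assms(3) np unfolding boundary_compatible_def q_def by blast
  then have "\<alpha> = 0" using \<nu>pos by (simp add: n_def n'_def a_def b_def)
  then have E0: "E = 0" using Bpos Dpos by (simp add: \<alpha>_def)
  define P where "P = (\<lambda>N. \<forall>w. hmet D\<Phi> \<zeta> p N w = gmet D\<Phi> (\<zeta>, p) (1, 0) (0, w))"
  have Peq: "\<And>N. P N \<longleftrightarrow> (\<forall>w. c * inner N w = G a (0, w))"
    unfolding P_def hmet_def gmet_def q_def[symmetric] D_def[symmetric] G_def a_def using iso by simp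
  define N0 :: "real^2" where "N0 = (1 / c) *\<^sub>R vector [G a (0, vector [1, 0]), G a (0, vector [0, 1])]"
  have "P N0"
    unfolding Peq
  proof
    fix w :: "real^2"
    have w: "(0::real, w) = (w$1) *\<^sub>R (0, vector [1, 0]) + (w$2) *\<^sub>R (0, vector [0, 1])"
      by (simp add: vec_eq_iff forall_2)
    have "G a (0, w) = w$1 * G a (0, vector [1, 0]) + w$2 * G a (0, vector [0, 1])"
      by (subst w) (simp only: Gadd2 Gsc2)
    then show "c * inner N0 w = G a (0, w)"
      using c0 by (simp add: N0_def inner_vec_def sum_2 algebra_simps)
  qed
  moreover have "\<And>N. P N \<Longrightarrow> N = N0"
  proof -
    fix N assume "P N"
    then have "\<forall>w. c * inner (N - N0) w = 0" using \<open>P N0\<close> unfolding Peq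
      by (simp add: inner_diff_left algebra_simps)
    then have "c * inner (N - N0) (N - N0) = 0" by blast
    then show "N = N0" using c0 by simp
  qed
  ultimately have "P (THE N. P N)" by (rule theI)
  then have "P (shift_vector D\<Phi> \<zeta> p)" unfolding shift_vector_def P_def by simp
  then have "c * inner (shift_vector D\<Phi> \<zeta> p) p = G a (0, p)" unfolding Peq by blast
  also have "\<dots> = 0" using E0 Gsym unfolding E_def by simp
  finally have "inner p (shift_vector D\<Phi> \<zeta> p) = 0" using c0 by (simp add: inner_commute)
  then show "inner p (u p + shift_vector D\<Phi> \<zeta> p) = 0"
    using assms(4) np by (simp add: inner_add_right inner_commute)
qed
end
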